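(* In the setting of the context, fix a feasible basis and distinct integers $r,s$ with $0\le r,s\le d$, and let $\alpha_i=u_i(\theta_r)$ for $0\le i\le d$. The following are equivalent: (i) in $\Delta$, vertex $r$ is adjacent to vertex $s$ and to no other vertex; (ii) for $0\le i\le d$, $$c_i\theta^*_{i-1}\alpha_{i-1}+a_i\theta^*_i\alpha_i+b_i\theta^*_{i+1}\alpha_{i+1}-\theta_r\theta^*_i\alpha_i=(\theta_s-\theta_r)(\theta^*_i-a^*_r)\alpha_i$$ (terms with $c_0=0$ or $b_d=0$ vanish, so $\alpha_{-1},\alpha_{d+1},\theta^*_{-1},\theta^*_{d+1}$ are irrelevant), and there exists $i\in\{0,\dots,d\}$ with $(\theta_s-\theta_r)(\theta^*_i-a^*_r)\alpha_i\ne0$.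
   Context: Let $\mathbb F$ be a field, $d\ge1$, $V$ an $\mathbb F$-vector space of dimension $d+1$, $\mathcal A=\mathrm{End}(V)$ with identity $I$. Let $E^*_0,\dots,E^*_d\in\mathcal A$ satisfy $E^*_iE^*_j=\delta_{i,j}E^*_i$, $\mathrm{rank}(E^*_i)=1$. Let $A\in\mathcal A$ satisfy $E^*_iAE^*_j=0$ if $|i-j|>1$ and $\neq0$ if $|i-j|=1$. Assume $A$ has $d+1$ distinct eigenvalues $\theta_0,\dots,\theta_d\in\mathbb F$ with primitive idempotents $E_i=\prod_{j\ne i}\frac{A-\theta_jI}{\theta_i-\theta_j}$. Let $\theta^*_i\in\mathbb F$, $A^*=\sum_i\theta^*_iE^*_i$, $a^*_i=\mathrm{tr}(E_iA^* )$. Let $\Delta$ be the graph on $\{0,\dots,d\}$ with $i\sim j$ iff $i\ne j$ and $E_iA^*E_j\ne0$. A basis $v_0,\dots,v_d$ of $V$ is feasible if $v_i\in E^*_iV$ for all $i$; then $Av_i=b_{i-1}v_{i-1}+a_iv_i+c_{i+1}v_{i+1}$ ($v_{-1}=v_{d+1}=0$), with $a_i=\mathrm{tr}(E^*_iA)$, nonzero $b_0,\dots,b_{d-1}$, $c_1,\dots,c_d$, and $b_d=c_0=0$. Define $u_0,\dots,u_{d+1}\in\mathbb F[\lambda]$ by $u_{-1}=0$, $u_0=1$, $\lambda u_i=c_iu_{i-1}+a_iu_i+b_iu_{i+1}$ $(0\le i\le d-1)$, $\lambda u_d=c_du_{d-1}+a_du_d+u_{d+1}/(b_0\cdots b_{d-1})$.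 *)

theory Defs
  imports "Jordan_Normal_Form.Matrix" "Jordan_Normal_Form.DL_Rank" "Jordan_Normal_Form.Char_Poly"
    "HOL-Computational_Algebra.Polynomial"
begin

definition mtrace :: "'a::comm_ring_1 mat \<Rightarrow> 'a" where
  "mtrace M = (\<Sum>i<dim_row M. M $$ (i, i))"

definition prim_idem :: "nat \<Rightarrow> nat \<Rightarrow> 'a::field mat \<Rightarrow> (nat \<Rightarrow> 'a) \<Rightarrow> nat \<Rightarrow> 'a mat" where
  "prim_idem n d A th i =
     foldr (\<lambda>j M. ((1 / (th i - th j)) \<cdot>\<^sub>m (A - th j \<cdot>\<^sub>m 1\<^sub>m n)) * M)
           (filter (\<lambda>j. j \<noteq> i) [0..<Suc d]) (1\<^sub>m n)"

definition uscale :: "(nat \<Rightarrow> 'a::field) \<Rightarrow> nat \<Rightarrow> nat \<Rightarrow> 'a poly \<Rightarrow> 'a poly" where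
  "uscale b d i p = (if i < d then smult (inverse (b i)) p
                     else if i = d then smult (\<Prod>j<d. b j) p else 0)"

text \<open>The polynomials u_0, ..., u_{d+1} (values beyond d+1 are irrelevant and set to 0).
  u_{-1} = 0, u_0 = 1,
  lambda u_i = c_i u_{i-1} + a_i u_i + b_i u_{i+1}  (0 <= i <= d-1),
  lambda u_d = c_d u_{d-1} + a_d u_d + u_{d+1}/(b_0 ... b_{d-1}).\<close>
fun upol :: "(nat \<Rightarrow> 'a::field) \<Rightarrow> (nat \<Rightarrow> 'a) \<Rightarrow> (nat \<Rightarrow> 'a) \<Rightarrow> nat \<Rightarrow> nat \<Rightarrow> 'a poly" where
  "upol a b c d 0 = 1"
| "upol a b c d (Suc 0) = uscale b d 0 [:- a 0, 1:]"
| "upol a b c d (Suc (Suc i)) =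
     uscale b d (Suc i) ([:- a (Suc i), 1:] * upol a b c d (Suc i) - smult (c (Suc i)) (upol a b c d i))"

end

theory Submission
  imports Defs
begin


lemma mtrace_comm:
  fixes X Y :: "'a::comm_ring_1 mat"
  assumes "X \<in> carrier_mat n n" "Y \<in> carrier_mat n n"
  shows "mtrace (X * Y) = mtrace (Y * X)"
proof -
  have "mtrace (X * Y) = (\<Sum>i<n. \<Sum>k<n. X $$ (i,k) * Y $$ (k,i))"
    using assms unfolding mtrace_def
    by (auto simp: scalar_prod_def row_def col_def intro!: sum.cong atLeast0LessThan[symmetric])
  also have "\<dots> = (\<Sum>k<n. \<Sum>i<n. Y $$ (k,i) * X $$ (i,k))"
    by (subst sum.swap) (simp add: mult.commute)
  also have "\<dots> = mtrace (Y * X)"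
    using assms unfolding mtrace_def
    by (auto simp: scalar_prod_def row_def col_def intro!: sum.cong atLeast0LessThan)
  finally show ?thesis .
qed

lemma inverse_exists:
  fixes X :: "'a::field mat"
  assumes X: "X \<in> carrier_mat n n"
    and inj: "\<And>y. y \<in> carrier_vec n \<Longrightarrow> X *\<^sub>v y = 0\<^sub>v n \<Longrightarrow> y = 0\<^sub>v n"
  shows "\<exists>Y. Y \<in> carrier_mat n n \<and> Y * X = 1\<^sub>m n \<and> X * Y = 1\<^sub>m n"
proof -
  have "det X \<noteq> 0" using det_0_iff_vec_prod_zero[OF X] inj by auto
  from det_non_zero_imp_unit[OF X this, of "()"]
  obtain Y where Y: "Y \<in> carrier_mat n n" "Y * X = 1\<^sub>m n" 
    unfolding Units_def ring_mat_def by auto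
  moreover have "X * Y = 1\<^sub>m n" using mat_mult_left_right_inverse[OF Y(1) X Y(2)] .
  ultimately show ?thesis by blast
qed

lemma tri_sum_right:
  fixes g :: "nat \<Rightarrow> 'a::comm_ring_1"
  assumes "j < n"
  shows "(\<Sum>k<n. g k * (if k = j then aa k else if j = k+1 then bb k else if k = j+1 then cc k else 0))
    = (if 0 < j then g (j-1) * bb (j-1) else 0) + g j * aa j + (if j + 1 < n then g (j+1) * cc (j+1) else 0)"
proof -
  have "(\<Sum>k<n. g k * (if k = j then aa k else if j = k+1 then bb k else if k = j+1 then cc k else 0))
    = (\<Sum>k<n. (if k = j then g k * aa k else 0) + (if k + 1 = j then g k * bb k else 0) + (if k = j+1 then g k * cc k else 0))"
    by (rule sum.cong) auto
  also have "\<dots> = (\<Sum>k<n. (if k = j then g k * aa k else 0)) + (\<Sum>k<n. (if k + 1 = j then g k * bb k else 0)) + (\<Sum>k<n. (if k = j+1 then g k * cc k else 0))"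
    by (simp add: sum.distrib)
  also have "(\<Sum>k<n. (if k + 1 = j then g k * bb k else 0)) = (\<Sum>k<n. (if k = j - 1 then (if 0 < j then g k * bb k else 0) else 0))"
    by (rule sum.cong) auto
  finally show ?thesis using assms by (simp add: sum.delta)
qed

lemma tri_sum_left:
  fixes y :: "nat \<Rightarrow> 'a::comm_ring_1"
  assumes "i < n"
  shows "(\<Sum>j<n. (if i = j then aa i else if j = i+1 then bb i else if i = j+1 then cc i else 0) * y j)
    = (if 0 < i then cc i * y (i-1) else 0) + aa i * y i + (if i + 1 < n then bb i * y (i+1) else 0)"
proof -
  have "(\<Sum>j<n. (if i = j then aa i else if j = i+1 then bb i else if i = j+1 then cc i else 0) * y j)
    = (\<Sum>j<n. (if j = i then aa i * y j else 0) + (if j = i + 1 then bb i * y j else 0) + (if j = i - 1 then (if 0 < i then cc i * y j else 0) else 0))"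
    by (rule sum.cong) auto
  also have "\<dots> = (\<Sum>j<n. (if j = i then aa i * y j else 0)) + (\<Sum>j<n. (if j = i + 1 then bb i * y j else 0)) + (\<Sum>j<n. (if j = i - 1 then (if 0 < i then cc i * y j else 0) else 0))"
    by (simp add: sum.distrib)
  finally show ?thesis using assms by (simp add: sum.delta)
qed



lemma smult_mat_mult_vec:
  fixes M :: "'a::comm_ring_1 mat"
  assumes "M \<in> carrier_mat n m" "x \<in> carrier_vec m"
  shows "(k \<cdot>\<^sub>m M) *\<^sub>v x = k \<cdot>\<^sub>v (M *\<^sub>v x)"
  using assms by (auto intro!: eq_vecI simp: scalar_prod_def sum_distrib_left ac_simps)

lemma one_mult_vec_s:
  fixes x :: "'a::comm_ring_1 vec"
  assumes "x \<in> carrier_vec n"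
  shows "(k \<cdot>\<^sub>m 1\<^sub>m n) *\<^sub>v x = k \<cdot>\<^sub>v x"
  using assms smult_mat_mult_vec[of "1\<^sub>m n" n n x k] by simp

lemma foldr_idem_vec:
  fixes A :: "'a::field mat"
  assumes A: "A \<in> carrier_mat n n" and x: "x \<in> carrier_vec n" and ev: "A *\<^sub>v x = \<mu> \<cdot>\<^sub>v x"
  shows "foldr (\<lambda>j M. ((1 / (th i - th j)) \<cdot>\<^sub>m (A - th j \<cdot>\<^sub>m 1\<^sub>m n)) * M) xs (1\<^sub>m n) \<in> carrier_mat n n \<and>
         foldr (\<lambda>j M. ((1 / (th i - th j)) \<cdot>\<^sub>m (A - th j \<cdot>\<^sub>m 1\<^sub>m n)) * M) xs (1\<^sub>m n) *\<^sub>v x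
          = (\<Prod>j\<leftarrow>xs. (\<mu> - th j) / (th i - th j)) \<cdot>\<^sub>v x"
proof (induction xs)
  case Nil
  then show ?case using x by simp
next
  case (Cons j xs)
  let ?M = "foldr (\<lambda>j M. ((1 / (th i - th j)) \<cdot>\<^sub>m (A - th j \<cdot>\<^sub>m 1\<^sub>m n)) * M) xs (1\<^sub>m n)"
  let ?B = "(1 / (th i - th j)) \<cdot>\<^sub>m (A - th j \<cdot>\<^sub>m 1\<^sub>m n)"
  have M: "?M \<in> carrier_mat n n" using Cons by auto
  have B: "?B \<in> carrier_mat n n" using A by auto
  have Bx: "?B *\<^sub>v x = ((\<mu> - th j) / (th i - th j)) \<cdot>\<^sub>v x"
  proof -
    have "?B *\<^sub>v x = (1 / (th i - th j)) \<cdot>\<^sub>v ((A - th j \<cdot>\<^sub>m 1\<^sub>m n) *\<^sub>v x)"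
      by (rule smult_mat_mult_vec[of _ n n], insert A x, auto)
    also have "(A - th j \<cdot>\<^sub>m 1\<^sub>m n) *\<^sub>v x = A *\<^sub>v x - (th j \<cdot>\<^sub>m 1\<^sub>m n) *\<^sub>v x"
      using A x by (simp add: minus_mult_distrib_mat_vec)
    also have "\<dots> = (\<mu> - th j) \<cdot>\<^sub>v x" using x ev
      by (auto simp: one_mult_vec_s algebra_simps intro!: eq_vecI)
    finally show ?thesis using x by (auto intro!: eq_vecI)
  qed
  have "(?B * ?M) *\<^sub>v x = ?B *\<^sub>v (?M *\<^sub>v x)" using B M x by (simp add: assoc_mult_mat_vec)
  also have "\<dots> = (\<Prod>j\<leftarrow>xs. (\<mu> - th j) / (th i - th j)) \<cdot>\<^sub>v (?B *\<^sub>v x)"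
    using Cons B x by (simp add: mult_mat_vec)
  also have "\<dots> = (\<Prod>j\<leftarrow>j#xs. (\<mu> - th j) / (th i - th j)) \<cdot>\<^sub>v x"
    unfolding Bx using x by (auto intro!: eq_vecI)
  finally show ?case using B M by simp
qed

lemma prod_list_one: "(\<Prod>m\<leftarrow>xs. (1::'b::monoid_mult)) = 1"
  by (induct xs) auto

lemma prim_idem_vec:
  fixes A :: "'a::field mat"
  assumes A: "A \<in> carrier_mat n n" and x: "x \<in> carrier_vec n" and ev: "A *\<^sub>v x = th j \<cdot>\<^sub>v x"
    and inj: "inj_on th {..d}" and j: "j \<le> d" and k: "k \<le> d"
  shows "prim_idem n d A th k \<in> carrier_mat n n"
    "prim_idem n d A th k *\<^sub>v x = (if k = j then x else 0\<^sub>v n)"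
proof -
  let ?xs = "filter (\<lambda>m. m \<noteq> k) [0..<Suc d]"
  note F = foldr_idem_vec[OF A x ev, of th k ?xs]
  show "prim_idem n d A th k \<in> carrier_mat n n" using F unfolding prim_idem_def by simp
  have "prim_idem n d A th k *\<^sub>v x = (\<Prod>m\<leftarrow>?xs. (th j - th m) / (th k - th m)) \<cdot>\<^sub>v x"
    using F unfolding prim_idem_def by simp
  also have "(\<Prod>m\<leftarrow>?xs. (th j - th m) / (th k - th m)) = (if k = j then 1 else 0)"
  proof (cases "k = j")
    case True
    have "map (\<lambda>m. (th j - th m) / (th k - th m)) ?xs = map (\<lambda>m. 1) ?xs"
    proof (rule map_cong[OF refl])
      fix m assume "m \<in> set ?xs"
      then have "m \<le> d" "m \<noteq> k" by (auto simp del: upt_Suc)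
      then have "th k \<noteq> th m" using inj k inj_onD by fastforce
      then show "(th j - th m) / (th k - th m) = 1" using True by simp
    qed
    then have "(\<Prod>m\<leftarrow>?xs. (th j - th m) / (th k - th m)) = (\<Prod>m\<leftarrow>?xs. 1)" by (rule arg_cong)
    also have "\<dots> = 1" by (rule prod_list_one)
    finally show ?thesis using True by simp
  next
    case False
    have "j \<in> set ?xs" using False j by (auto simp del: upt_Suc)
    then have "0 \<in> set (map (\<lambda>m. (th j - th m) / (th k - th m)) ?xs)" by force
    then show ?thesis using False by (simp add: prod_list_zero_iff del: set_map)
  qed
  finally show "prim_idem n d A th k *\<^sub>v x = (if k = j then x else 0\<^sub>v n)" using x by auto
qed



lemma aux_ring: "inverse (B::'a::field) * ((t - a) * (y * P) - c * (y * Q)) = y * (inverse B * ((t - a) * P - c * Q))"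
  by (simp add: algebra_simps)

lemma tri_rec:
  fixes y :: "nat \<Rightarrow> 'a::field"
  assumes d1: "1 \<le> d"
    and rec: "\<And>i. i \<le> d \<Longrightarrow> \<theta> * y i = (if 0 < i then c i * y (i-1) else 0) + a i * y i + (if i < d then b i * y (i+1) else 0)"
    and bnz: "\<And>i. i < d \<Longrightarrow> b i \<noteq> 0"
  shows "i \<le> d \<Longrightarrow> y i = y 0 * poly (upol a b c d i) \<theta>"
proof -
  let ?p = "\<lambda>i. poly (upol a b c d i) \<theta>"
  have "Suc i \<le> d \<longrightarrow> (y i = y 0 * ?p i \<and> y (Suc i) = y 0 * ?p (Suc i))" for i
  proof (induction i)
    case 0
    have r0: "\<theta> * y 0 = a 0 * y 0 + b 0 * y 1" using rec[of 0] d1 by simp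
    have b0: "b 0 \<noteq> 0" using bnz d1 by simp
    have "y 1 = y 0 * ((\<theta> - a 0) / b 0)" using r0 b0 by (simp add: field_simps)
    then show ?case using d1 b0 by (simp add: uscale_def divide_simps)
  next
    case (Suc i)
    show ?case
    proof
      assume si: "Suc (Suc i) \<le> d"
      with Suc have IH: "y i = y 0 * ?p i" "y (Suc i) = y 0 * ?p (Suc i)" by auto
      have r: "\<theta> * y (Suc i) = c (Suc i) * y i + a (Suc i) * y (Suc i) + b (Suc i) * y (Suc (Suc i))"
        using rec[of "Suc i"] si by simp
      have bs: "b (Suc i) \<noteq> 0" using bnz si by simp
      have "b (Suc i) * y (Suc (Suc i)) = (\<theta> - a (Suc i)) * y (Suc i) - c (Suc i) * y i"
        using r by (simp add: algebra_simps)
      then have "inverse (b (Suc i)) * (b (Suc i) * y (Suc (Suc i))) = inverse (b (Suc i)) * ((\<theta> - a (Suc i)) * y (Suc i) - c (Suc i) * y i)"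
        by (rule arg_cong)
      then have "y (Suc (Suc i)) = inverse (b (Suc i)) * ((\<theta> - a (Suc i)) * y (Suc i) - c (Suc i) * y i)"
        using bs by (metis (no_types, lifting) mult.assoc left_inverse mult_1)
      also have "\<dots> = y 0 * ?p (Suc (Suc i))"
      proof -
        have e: "?p (Suc (Suc i)) = inverse (b (Suc i)) * ((\<theta> - a (Suc i)) * ?p (Suc i) - c (Suc i) * ?p i)"
          using si by (simp add: uscale_def, simp add: algebra_simps)
        show ?thesis unfolding IH e by (rule aux_ring)
      qed
      finally show "y (Suc i) = y 0 * ?p (Suc i) \<and> y (Suc (Suc i)) = y 0 * ?p (Suc (Suc i))" using IH by simp
    qed
  qed
  note H = this
  show "i \<le> d \<Longrightarrow> y i = y 0 * ?p i"
  proof -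
    assume i: "i \<le> d"
    show ?thesis
    proof (cases "i = d")
      case True
      then have "Suc (d - 1) \<le> d" "Suc (d - 1) = i" using d1 by auto
      then show ?thesis using H[of "d - 1"] by metis
    next
      case False
      then have "Suc i \<le> d" using i by auto
      then show ?thesis using H[of i] by blast
    qed
  qed
qed


declare upt_Suc[simp del]



lemma basis_inj:
  fixes v :: "nat \<Rightarrow> 'a::field vec"
  assumes B: "vectorspace.basis class_ring (module_vec TYPE('a) n) (v ` {..d})"
    and vinj: "inj_on v {..d}" and n: "n = Suc d"
    and y: "y \<in> carrier_vec n" and Vy: "mat_of_cols n (map v [0..<n]) *\<^sub>v y = 0\<^sub>v n"
  shows "y = 0\<^sub>v n"
proof -
  interpret vec_space "TYPE('a)" n .
  have Bs: "basis (v ` {..d})" using B by simp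
  have sub: "v ` {..d} \<subseteq> carrier_vec n" and li: "lin_indpt (v ` {..d})"
    using Bs unfolding basis_def by auto
  let ?lst = "map v [0..<n]"
  have setl: "set ?lst = v ` {..d}" using n by (auto simp del: upt_Suc simp: atLeast0LessThan lessThan_Suc_atMost)
  have len: "length ?lst = n" by simp
  define f where "f l = sum (\<lambda> i. if l = ?lst ! i then y $ i else 0) {0..<length ?lst}" for l
  have "mat_of_cols n ?lst *\<^sub>v y = lincomb f (set ?lst)"
    unfolding f_def
    by (rule mat_of_cols_mult_as_finsum, insert y sub n, auto simp del: upt_Suc)
  then have lc: "lincomb f (v ` {..d}) = 0\<^sub>v n" using Vy setl by simp
  have fv: "f (v i) = y $ i" if i: "i \<le> d" for i
  proof -
    have "f (v i) = sum (\<lambda> k. if k = i then y $ k else 0) {0..<n}"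
      unfolding f_def len
    proof (rule sum.cong[OF refl])
      fix k assume k: "k \<in> {0..<n}"
      have "(v i = ?lst ! k) = (k = i)" using k i n vinj by (auto dest: inj_onD)
      then show "(if v i = ?lst ! k then y $ k else 0) = (if k = i then y $ k else 0)" by simp
    qed
    also have "\<dots> = y $ i" using i n by simp
    finally show ?thesis .
  qed
  show ?thesis
  proof (rule ccontr)
    assume "y \<noteq> 0\<^sub>v n"
    then obtain i where i: "i < n" "y $ i \<noteq> 0" using y by (metis carrier_vecD eq_vecI index_zero_vec(1,2))
    have "lin_dep (v ` {..d})"
      unfolding lin_dep_def
      by (rule exI[of _ "v ` {..d}"], rule exI[of _ f], rule exI[of _ "v i"],
          insert lc fv i n, auto simp: class_ring_simps)
    then show False using li by simp
  qed
qed




theorem proposition7p13: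
  fixes d :: nat
    and Es :: "nat \<Rightarrow> 'a::field mat"
    and A :: "'a mat"
    and th ths :: "nat \<Rightarrow> 'a"
    and v :: "nat \<Rightarrow> 'a vec"
    and b c :: "nat \<Rightarrow> 'a"
    and r s :: nat
  defines "n \<equiv> Suc d"
  defines "E \<equiv> prim_idem n d A th"
  defines "Astar \<equiv> foldr (\<lambda>i M. ths i \<cdot>\<^sub>m Es i + M) [0..<Suc d] (0\<^sub>m n n)"
  defines "astar \<equiv> (\<lambda>i. mtrace (E i * Astar))"
  defines "adj \<equiv> (\<lambda>i j. i \<noteq> j \<and> E i * Astar * E j \<noteq> 0\<^sub>m n n)"
  defines "a \<equiv> (\<lambda>i. mtrace (Es i * A))"
  defines "\<alpha> \<equiv> (\<lambda>i. poly (upol a b c d i) (th r))"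
  assumes d1: "1 \<le> d"
    and Es_carrier: "\<And>i. i \<le> d \<Longrightarrow> Es i \<in> carrier_mat n n"
    and Es_orth: "\<And>i j. i \<le> d \<Longrightarrow> j \<le> d \<Longrightarrow> Es i * Es j = (if i = j then Es i else 0\<^sub>m n n)"
    and Es_rank: "\<And>i. i \<le> d \<Longrightarrow> vec_space.rank n (Es i) = 1"
    and A_carrier: "A \<in> carrier_mat n n"
    and A_zero: "\<And>i j. i \<le> d \<Longrightarrow> j \<le> d \<Longrightarrow> 1 < \<bar>int i - int j\<bar> \<Longrightarrow> Es i * A * Es j = 0\<^sub>m n n"
    and A_nonzero: "\<And>i j. i \<le> d \<Longrightarrow> j \<le> d \<Longrightarrow> \<bar>int i - int j\<bar> = 1 \<Longrightarrow> Es i * A * Es j \<noteq> 0\<^sub>m n n"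
    and th_distinct: "inj_on th {..d}"
    and th_eig: "\<And>i. i \<le> d \<Longrightarrow> eigenvalue A (th i)"
    and v_basis: "vectorspace.basis class_ring (module_vec TYPE('a) n) (v ` {..d})"
    and v_inj: "inj_on v {..d}"
    and v_feasible: "\<And>i. i \<le> d \<Longrightarrow> v i \<in> (\<lambda>w. Es i *\<^sub>v w) ` carrier_vec n"
    and A_v: "\<And>i. i \<le> d \<Longrightarrow> A *\<^sub>v v i =
                 (if 0 < i then b (i - 1) \<cdot>\<^sub>v v (i - 1) else 0\<^sub>v n) + a i \<cdot>\<^sub>v v i
                 + (if i < d then c (i + 1) \<cdot>\<^sub>v v (i + 1) else 0\<^sub>v n)"
    and b_d: "b d = 0"
    and c_0: "c 0 = 0"
    and rs: "r \<le> d" "s \<le> d" "r \<noteq> s"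
  shows "(adj r s \<and> (\<forall>j\<le>d. adj r j \<longrightarrow> j = s)) \<longleftrightarrow>
         ((\<forall>i\<le>d. c i * ths (i - 1) * \<alpha> (i - 1) + a i * ths i * \<alpha> i
                    + b i * ths (i + 1) * \<alpha> (i + 1) - th r * ths i * \<alpha> i
                  = (th s - th r) * (ths i - astar r) * \<alpha> i)
          \<and> (\<exists>i\<le>d. (th s - th r) * (ths i - astar r) * \<alpha> i \<noteq> 0))"
proof -
  interpret MR: matrix_ring n "TYPE('a)" .
  have ltn: "i < n \<longleftrightarrow> i \<le> d" for i unfolding n_def by auto
  have v_car: "v i \<in> carrier_vec n" if "i \<le> d" for i
    using v_feasible[OF that] Es_carrier[OF that] by auto
  have v_dim: "dim_vec (v i) = n" if "i \<le> d" for i using v_car[OF that] by simp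
  have Es_v: "Es i *\<^sub>v v j = (if i = j then v j else 0\<^sub>v n)" if ij: "i \<le> d" "j \<le> d" for i j
  proof -
    obtain w where w: "w \<in> carrier_vec n" "v j = Es j *\<^sub>v w" using v_feasible[OF ij(2)] by auto
    have "Es i *\<^sub>v v j = (Es i * Es j) *\<^sub>v w" using w Es_carrier[OF ij(1)] Es_carrier[OF ij(2)] by simp
    also have "\<dots> = (if i = j then v j else 0\<^sub>v n)" using Es_orth[OF ij] w by auto
    finally show ?thesis .
  qed
  define V where "V = mat n n (\<lambda>(i,j). v j $ i)"
  have V: "V \<in> carrier_mat n n" unfolding V_def by simp
  have colV: "col V j = v j" if "j \<le> d" for j
    using v_car[OF that] that unfolding V_def by (auto simp: ltn intro!: eq_vecI)
  have V_mc: "V = mat_of_cols n (map v [0..<n])"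
    unfolding V_def mat_of_cols_def by (rule eq_matI) (auto simp del: upt_Suc)
  have V_inj: "y = 0\<^sub>v n" if "y \<in> carrier_vec n" "V *\<^sub>v y = 0\<^sub>v n" for y
    using basis_inj[OF v_basis v_inj n_def[THEN meta_eq_to_obj_eq] that(1)] that(2) V_mc by simp
  obtain W where W: "W \<in> carrier_mat n n" "W * V = 1\<^sub>m n" "V * W = 1\<^sub>m n"
    using inverse_exists[OF V V_inj] by blast
  have XV: "(X * V) $$ (i,j) = (X *\<^sub>v v j) $ i" if "X \<in> carrier_mat n n" "i < n" "j < n" for X i j
    using that colV[of j] V by (simp add: ltn)
  have VX: "(V * X) $$ (i,j) = (\<Sum>k<n. v k $ i * X $$ (k,j))" if "X \<in> carrier_mat n n" "i < n" "j < n" for X i j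
    using that V unfolding V_def by (auto simp: scalar_prod_def row_def col_def atLeast0LessThan intro!: sum.cong)
  have zero_by_v: "X = 0\<^sub>m n n" if X: "X \<in> carrier_mat n n" and Xv: "\<And>j. j \<le> d \<Longrightarrow> X *\<^sub>v v j = 0\<^sub>v n" for X
  proof -
    have XV0: "X * V = 0\<^sub>m n n"
    proof (rule eq_matI)
      fix i j assume ij: "i < dim_row (0\<^sub>m n n :: 'a mat)" "j < dim_col (0\<^sub>m n n :: 'a mat)"
      then have "(X * V) $$ (i,j) = (X *\<^sub>v v j) $ i" using XV[OF X] by simp
      also have "\<dots> = 0" using Xv[of j] ij by (simp add: ltn)
      finally show "(X * V) $$ (i,j) = 0\<^sub>m n n $$ (i,j)" using ij by simp
    qed (use X V in auto)
    have "X = X * (V * W)" using X W by simp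
    also have "\<dots> = (X * V) * W" using X V W by (simp add: MR.m_assoc)
    finally show ?thesis using XV0 W by simp
  qed
  define T where "T = mat n n (\<lambda>(i,j). if i = j then a i else if j = i+1 then b i else if i = j+1 then c i else 0)"
  have T: "T \<in> carrier_mat n n" unfolding T_def by simp
  have AV: "A * V = V * T"
  proof (rule eq_matI)
    fix i j assume ij: "i < dim_row (V * T)" "j < dim_col (V * T)"
    then have i: "i < n" and j: "j < n" using V T by auto
    have "(A * V) $$ (i,j) = (A *\<^sub>v v j) $ i" using XV[OF A_carrier i j] .
    also have "\<dots> = (if 0 < j then v (j-1) $ i * b (j-1) else 0) + v j $ i * a j + (if j + 1 < n then v (j+1) $ i * c (j+1) else 0)"
      unfolding A_v[of j, unfolded ltn[symmetric], OF j] using i j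
      by (auto simp: ltn v_dim)
    also have "\<dots> = (\<Sum>k<n. v k $ i * (if k = j then a k else if j = k+1 then b k else if k = j+1 then c k else 0))"
      by (rule tri_sum_right[symmetric, OF j])
    also have "\<dots> = (\<Sum>k<n. v k $ i * T $$ (k,j))"
      by (rule sum.cong) (auto simp: T_def j)
    also have "\<dots> = (V * T) $$ (i,j)" using VX[OF T i j] by simp
    finally show "(A * V) $$ (i,j) = (V * T) $$ (i,j)" .
  qed (use A_carrier V T in auto)
  have Astar_fold: "foldr (\<lambda>i M. ths i \<cdot>\<^sub>m Es i + M) xs (0\<^sub>m n n) \<in> carrier_mat n n \<and>
     foldr (\<lambda>i M. ths i \<cdot>\<^sub>m Es i + M) xs (0\<^sub>m n n) *\<^sub>v v j = (if j \<in> set xs then ths j \<cdot>\<^sub>v v j else 0\<^sub>v n)"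
    if "set xs \<subseteq> {..d}" "distinct xs" "j \<le> d" for xs j
    using that
  proof (induction xs)
    case Nil
    then show ?case using v_car[OF Nil(3)] by (auto intro!: eq_vecI simp: scalar_prod_def)
  next
    case (Cons i xs)
    let ?M = "foldr (\<lambda>i M. ths i \<cdot>\<^sub>m Es i + M) xs (0\<^sub>m n n)"
    have IH: "?M \<in> carrier_mat n n" "?M *\<^sub>v v j = (if j \<in> set xs then ths j \<cdot>\<^sub>v v j else 0\<^sub>v n)"
      using Cons by auto
    have i: "i \<le> d" using Cons by auto
    have Ei: "ths i \<cdot>\<^sub>m Es i \<in> carrier_mat n n" using Es_carrier[OF i] by simp
    have "(ths i \<cdot>\<^sub>m Es i + ?M) *\<^sub>v v j = (ths i \<cdot>\<^sub>m Es i) *\<^sub>v v j + ?M *\<^sub>v v j"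
      by (rule add_mult_distrib_mat_vec[OF Ei IH(1) v_car[OF Cons(4)]])
    also have "(ths i \<cdot>\<^sub>m Es i) *\<^sub>v v j = ths i \<cdot>\<^sub>v (Es i *\<^sub>v v j)"
      by (rule smult_mat_mult_vec[OF Es_carrier[OF i] v_car[OF Cons(4)]])
    finally have "(ths i \<cdot>\<^sub>m Es i + ?M) *\<^sub>v v j = (if j \<in> set (i # xs) then ths j \<cdot>\<^sub>v v j else 0\<^sub>v n)"
      using IH(2) Es_v[OF i Cons(4)] Cons(3) v_car[OF Cons(4)] by auto
    then show ?case using Ei IH by simp
  qed
  have Astar: "Astar \<in> carrier_mat n n" and Astar_v: "Astar *\<^sub>v v j = ths j \<cdot>\<^sub>v v j" if "j \<le> d" for j
    using Astar_fold[of "[0..<Suc d]" j] that unfolding Astar_def by (auto simp: atLeastLessThanSuc_atLeastAtMost atLeast0AtMost)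
  have Astar_c: "Astar \<in> carrier_mat n n" using Astar[of 0] by simp
  define Dg where "Dg f = mat n n (\<lambda>(i,j). if i = j then f i else 0)" for f :: "nat \<Rightarrow> 'a"
  have Dg: "Dg f \<in> carrier_mat n n" for f unfolding Dg_def by simp
  have AstarV: "Astar * V = V * Dg ths"
  proof (rule eq_matI)
    fix i j assume ij: "i < dim_row (V * Dg ths)" "j < dim_col (V * Dg ths)"
    then have i: "i < n" and j: "j < n" using V Dg[of ths] by auto
    have "(Astar * V) $$ (i,j) = (Astar *\<^sub>v v j) $ i" using XV[OF Astar_c i j] .
    also have "\<dots> = v j $ i * ths j" using Astar_v[of j] i j by (simp add: ltn v_dim)
    also have "\<dots> = (\<Sum>k<n. v k $ i * Dg ths $$ (k,j))"
      using j by (simp add: Dg_def if_distrib cong: if_cong)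
    also have "\<dots> = (V * Dg ths) $$ (i,j)" using VX[OF Dg i j] by simp
    finally show "(Astar * V) $$ (i,j) = (V * Dg ths) $$ (i,j)" .
  qed (use Astar_c V Dg[of ths] in auto)
  have mvz: "M *\<^sub>v 0\<^sub>v n = 0\<^sub>v n" if "M \<in> carrier_mat n n" for M :: "'a mat"
    using that by (auto intro!: eq_vecI simp: scalar_prod_def)
  have EsAv: "Es k *\<^sub>v (A *\<^sub>v v j) = (if 0 < j \<and> k = j - 1 then b (j-1) \<cdot>\<^sub>v v k else 0\<^sub>v n)
       + (if k = j then a j \<cdot>\<^sub>v v k else 0\<^sub>v n) + (if j < d \<and> k = j + 1 then c (j+1) \<cdot>\<^sub>v v k else 0\<^sub>v n)"
    if k: "k \<le> d" and j: "j \<le> d" for k j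
  proof -
    define x where "x = (if 0 < j then b (j - 1) \<cdot>\<^sub>v v (j - 1) else 0\<^sub>v n)"
    define y where "y = a j \<cdot>\<^sub>v v j"
    define z where "z = (if j < d then c (j + 1) \<cdot>\<^sub>v v (j + 1) else 0\<^sub>v n)"
    have xc: "x \<in> carrier_vec n" unfolding x_def using v_car j by auto
    have yc: "y \<in> carrier_vec n" unfolding y_def using v_car j by auto
    have zc: "z \<in> carrier_vec n" unfolding z_def using v_car j by auto
    have Ek: "Es k \<in> carrier_mat n n" using Es_carrier[OF k] .
    have "Es k *\<^sub>v (A *\<^sub>v v j) = Es k *\<^sub>v (x + y + z)" unfolding A_v[OF j] x_def y_def z_def ..
    also have "\<dots> = Es k *\<^sub>v x + Es k *\<^sub>v y + Es k *\<^sub>v z"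
      using xc yc zc Ek by (auto simp: mult_add_distrib_mat_vec[of _ n n] intro!: eq_vecI)
    also have "Es k *\<^sub>v x = (if 0 < j \<and> k = j - 1 then b (j-1) \<cdot>\<^sub>v v k else 0\<^sub>v n)"
      unfolding x_def using Es_v[OF k, of "j-1"] mult_mat_vec[OF Ek v_car[of "j-1"]] mvz[OF Ek] j v_car k
      by auto
    also have "Es k *\<^sub>v y = (if k = j then a j \<cdot>\<^sub>v v k else 0\<^sub>v n)"
      unfolding y_def using Es_v[OF k j] mult_mat_vec[OF Ek v_car[OF j]] j k v_car
      by auto
    also have "Es k *\<^sub>v z = (if j < d \<and> k = j + 1 then c (j+1) \<cdot>\<^sub>v v k else 0\<^sub>v n)"
      unfolding z_def using Es_v[OF k, of "j+1"] mult_mat_vec[OF Ek v_car[of "j+1"]] mvz[OF Ek] j v_car k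
      by auto
    finally show ?thesis .
  qed
  have zero_vec_add: "0\<^sub>v n + x = x" "x + 0\<^sub>v n = x" if "x \<in> carrier_vec n" for x :: "'a vec"
    using that by auto
  have zsm: "(0::'a) \<cdot>\<^sub>v x = 0\<^sub>v n" if "x \<in> carrier_vec n" for x
    using that by (auto intro!: eq_vecI)
  have EsAEs: "(Es k * A * Es l) *\<^sub>v v j = (if j = l then Es k *\<^sub>v (A *\<^sub>v v j) else 0\<^sub>v n)"
    if kl: "k \<le> d" "l \<le> d" "j \<le> d" for k l j
  proof -
    have Ek: "Es k \<in> carrier_mat n n" and El: "Es l \<in> carrier_mat n n" using Es_carrier kl by auto
    have vj: "v j \<in> carrier_vec n" using v_car kl by auto
    have "(Es k * A * Es l) *\<^sub>v v j = (Es k * A) *\<^sub>v (Es l *\<^sub>v v j)"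
      by (rule assoc_mult_mat_vec[of _ n n _ n]) (use Ek El A_carrier vj in auto)
    also have "\<dots> = Es k *\<^sub>v (A *\<^sub>v (Es l *\<^sub>v v j))"
      by (rule assoc_mult_mat_vec[of _ n n _ n]) (use Ek El A_carrier vj in auto)
    finally show ?thesis using Es_v[OF kl(2,3)] mvz[OF A_carrier] mvz[OF Ek] by auto
  qed
  have bnz: "b i \<noteq> 0" if i: "i < d" for i
  proof
    assume b0: "b i = 0"
    have "Es i * A * Es (Suc i) = 0\<^sub>m n n"
    proof (rule zero_by_v)
      show "Es i * A * Es (Suc i) \<in> carrier_mat n n" using Es_carrier A_carrier i by auto
      fix j assume j: "j \<le> d"
      show "(Es i * A * Es (Suc i)) *\<^sub>v v j = 0\<^sub>v n"
        using EsAEs[of i "Suc i" j] i j b0 EsAv[of i j] v_car[of i] by (auto simp: zero_vec_add)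
    qed
    then show False using A_nonzero[of i "Suc i"] i by auto
  qed
  have cnz: "c (Suc i) \<noteq> 0" if i: "i < d" for i
  proof
    assume c0: "c (Suc i) = 0"
    have "Es (Suc i) * A * Es i = 0\<^sub>m n n"
    proof (rule zero_by_v)
      show "Es (Suc i) * A * Es i \<in> carrier_mat n n" using Es_carrier A_carrier i by auto
      fix j assume j: "j \<le> d"
      show "(Es (Suc i) * A * Es i) *\<^sub>v v j = 0\<^sub>v n"
        using EsAEs[of "Suc i" i j] i j c0 EsAv[of "Suc i" j] v_car[of "Suc i"] by (auto simp: zero_vec_add zsm)
    qed
    then show False using A_nonzero[of "Suc i" i] i by auto
  qed
  have WAV: "W * A * V = T"
  proof -
    have "W * A * V = W * (A * V)" using W A_carrier V by (simp add: MR.m_assoc)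
    also have "\<dots> = (W * V) * T" unfolding AV by (rule assoc_mult_mat[OF W(1) V T, symmetric])
    finally show ?thesis using W T by simp
  qed
  have TW: "T * W = W * A"
  proof -
    have "T * W = W * A * (V * W)" unfolding WAV[symmetric] using W A_carrier V by (simp add: MR.m_assoc)
    then show ?thesis using W A_carrier by simp
  qed
  have Tentry: "(T *\<^sub>v y) $ i = (if 0 < i then c i * y $ (i-1) else 0) + a i * y $ i + (if i < d then b i * y $ (i+1) else 0)"
    if "y \<in> carrier_vec n" "i \<le> d" for y i
  proof -
    have "(T *\<^sub>v y) $ i = (\<Sum>j<n. (if i = j then a i else if j = i+1 then b i else if i = j+1 then c i else 0) * y $ j)"
      using that T by (auto simp: scalar_prod_def row_def T_def ltn atLeast0LessThan intro!: sum.cong)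
    also have "\<dots> = (if 0 < i then c i * y $ (i-1) else 0) + a i * y $ i + (if i + 1 < n then b i * y $ (i+1) else 0)"
      by (rule tri_sum_left[of i n a b c "\<lambda>j. y $ j"]) (use that in \<open>simp add: ltn\<close>)
    finally show ?thesis by (simp add: ltn)
  qed
  define uvec where "uvec j = vec n (\<lambda>i. poly (upol a b c d i) (th j))" for j
  have uvec: "uvec j \<in> carrier_vec n" for j unfolding uvec_def by simp
  have Tu: "T *\<^sub>v uvec j = th j \<cdot>\<^sub>v uvec j" if j: "j \<le> d" for j
  proof -
    obtain x where x: "x \<in> carrier_vec n" "x \<noteq> 0\<^sub>v n" "A *\<^sub>v x = th j \<cdot>\<^sub>v x"
      using th_eig[OF j] A_carrier unfolding eigenvalue_def eigenvector_def by auto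
    define y where "y = W *\<^sub>v x"
    have y: "y \<in> carrier_vec n" unfolding y_def using W x by simp
    have Ty: "T *\<^sub>v y = th j \<cdot>\<^sub>v y"
    proof -
      have "T *\<^sub>v y = (T * W) *\<^sub>v x" unfolding y_def using T W x by simp
      also have "\<dots> = W *\<^sub>v (A *\<^sub>v x)" unfolding TW using W A_carrier x by simp
      also have "\<dots> = th j \<cdot>\<^sub>v y" unfolding x(3) y_def using W x by (simp add: mult_mat_vec)
      finally show ?thesis .
    qed
    have Vy: "V *\<^sub>v y = x" unfolding y_def
      using assoc_mult_mat_vec[OF V W(1) x(1), symmetric] W x by simp
    have rec: "th j * y $ i = (if 0 < i then c i * y $ (i-1) else 0) + a i * y $ i + (if i < d then b i * y $ (i+1) else 0)"
      if i: "i \<le> d" for i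
    proof -
      have "th j * y $ i = (T *\<^sub>v y) $ i" unfolding Ty using i y by (simp add: ltn)
      then show ?thesis using Tentry[OF y i] by simp
    qed
    have yi: "y $ i = y $ 0 * poly (upol a b c d i) (th j)" if "i \<le> d" for i
      by (rule tri_rec[of d "th j" "\<lambda>i. y $ i" c a b, OF d1 rec bnz that])
    have y0: "y $ 0 \<noteq> 0"
    proof
      assume "y $ 0 = 0"
      have "y $ i = 0" if "i < n" for i using yi[of i] that \<open>y $ 0 = 0\<close> by (simp add: ltn)
      then have "y = 0\<^sub>v n" using y by (auto intro!: eq_vecI)
      then show False using Vy x(2) mvz[OF V] by simp
    qed
    have uy: "uvec j = inverse (y $ 0) \<cdot>\<^sub>v y"
    proof (rule eq_vecI)
      fix i assume "i < dim_vec (inverse (y $ 0) \<cdot>\<^sub>v y)"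
      then have i: "i < n" using y by simp
      show "uvec j $ i = (inverse (y $ 0) \<cdot>\<^sub>v y) $ i"
        unfolding uvec_def using i y y0 yi[of i] by (simp add: ltn)
    qed (use y in \<open>simp add: uvec_def\<close>)
    show ?thesis unfolding uy using Ty T y by (auto simp: mult_mat_vec intro!: eq_vecI)
  qed
  have XYcol: "(X * Y) $$ (i,j) = (X *\<^sub>v col Y j) $ i"
    if "X \<in> carrier_mat n n" "Y \<in> carrier_mat n n" "i < n" "j < n" for X Y :: "'a mat" and i j
    using that by simp
  define U where "U = mat n n (\<lambda>(i,j). uvec j $ i)"
  have U: "U \<in> carrier_mat n n" unfolding U_def by simp
  have colU: "col U j = uvec j" if "j < n" for j
    using that uvec[of j] unfolding U_def by (auto intro!: eq_vecI)
  define P where "P = V * U"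
  have P: "P \<in> carrier_mat n n" unfolding P_def using V U by simp
  define w where "w j = V *\<^sub>v uvec j" for j
  have w: "w j \<in> carrier_vec n" for j unfolding w_def using V uvec[of j] by simp
  have colP: "col P j = w j" if "j < n" for j
    unfolding P_def w_def by (subst col_mult2[OF V U that]) (simp add: colU[OF that])
  have Pw: "P $$ (i,j) = w j $ i" if "i < n" "j < n" for i j
    using colP[OF that(2)] that P by (metis carrier_matD(1,2) index_col)
  have Aw: "A *\<^sub>v w j = th j \<cdot>\<^sub>v w j" if j: "j \<le> d" for j
  proof -
    have "A *\<^sub>v w j = (A * V) *\<^sub>v uvec j" unfolding w_def using A_carrier V uvec[of j] by simp
    also have "\<dots> = V *\<^sub>v (T *\<^sub>v uvec j)" unfolding AV using V T uvec[of j] by simp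
    also have "\<dots> = th j \<cdot>\<^sub>v w j" unfolding Tu[OF j] w_def using V uvec[of j] by (simp add: mult_mat_vec)
    finally show ?thesis .
  qed
  have u0: "uvec j $ 0 = 1" for j unfolding uvec_def n_def by simp
  have wnz: "w j \<noteq> 0\<^sub>v n" for j
  proof
    assume "w j = 0\<^sub>v n"
    then have "uvec j = 0\<^sub>v n" using V_inj[OF uvec[of j]] unfolding w_def by simp
    then show False using u0[of j] n_def by (metis index_zero_vec(1) zero_less_Suc zero_neq_one)
  qed
  have E: "E k \<in> carrier_mat n n" if "k \<le> d" for k
    using prim_idem_vec(1)[OF A_carrier w Aw[of 0] th_distinct _ that] unfolding E_def by simp
  have Ew: "E k *\<^sub>v w j = (if k = j then w j else 0\<^sub>v n)" if "k \<le> d" "j \<le> d" for k j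
    using prim_idem_vec(2)[OF A_carrier w Aw[OF that(2)] th_distinct that(2) that(1)] unfolding E_def by simp
  define D where "D k = Dg (\<lambda>i. if i = k then 1 else 0)" for k
  have D: "D k \<in> carrier_mat n n" for k unfolding D_def using Dg by simp
  have EP: "E k * P = P * D k" if k: "k \<le> d" for k
  proof (rule eq_matI)
    fix i j assume "i < dim_row (P * D k)" "j < dim_col (P * D k)"
    then have i: "i < n" and j: "j < n" using P D[of k] by auto
    have "(E k * P) $$ (i,j) = (E k *\<^sub>v w j) $ i" using XYcol[OF E[OF k] P i j] colP[OF j] by simp
    also have "\<dots> = (if j = k then w j $ i else 0)" using Ew[OF k, of j] j i by (auto simp: ltn)
    also have "\<dots> = (P * D k) $$ (i,j)" using i j P Pw[OF i j] Pw[OF i]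
      by (simp add: D_def Dg_def scalar_prod_def row_def col_def atLeast0LessThan if_distrib cong: if_cong)
    finally show "(E k * P) $$ (i,j) = (P * D k) $$ (i,j)" .
  qed (use E[OF k] P D[of k] in auto)
  have mv_entry: "(M *\<^sub>v y) $ i = (\<Sum>j<n. M $$ (i,j) * y $ j)"
    if "M \<in> carrier_mat n n" "y \<in> carrier_vec n" "i < n" for M :: "'a mat" and y i
    using that by (auto simp: scalar_prod_def row_def atLeast0LessThan intro!: sum.cong)
  have PDe: "(P * D k) $$ (i,j) = (if j = k then w k $ i else 0)" if "i < n" "j < n" for i j k
    using that P Pw[OF that] Pw[OF that(1)]
    by (simp add: D_def Dg_def scalar_prod_def row_def col_def atLeast0LessThan if_distrib cong: if_cong)
  have PDy: "(P * D k) *\<^sub>v y = y $ k \<cdot>\<^sub>v w k" if "y \<in> carrier_vec n" "k < n" for y k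
  proof (rule eq_vecI)
    fix i assume "i < dim_vec (y $ k \<cdot>\<^sub>v w k)"
    then have i: "i < n" using w[of k] by simp
    have "((P * D k) *\<^sub>v y) $ i = (\<Sum>j<n. (P * D k) $$ (i,j) * y $ j)"
      by (rule mv_entry) (use i that P D[of k] in auto)
    also have "\<dots> = (\<Sum>j<n. if j = k then w k $ i * y $ j else 0)"
      by (rule sum.cong) (use PDe i in auto)
    also have "\<dots> = (y $ k \<cdot>\<^sub>v w k) $ i" using that i w[of k] by simp
    finally show "((P * D k) *\<^sub>v y) $ i = (y $ k \<cdot>\<^sub>v w k) $ i" .
  qed (use P D[of k] w[of k] in auto)
  have P_inj: "y = 0\<^sub>v n" if y: "y \<in> carrier_vec n" and Py: "P *\<^sub>v y = 0\<^sub>v n" for y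
  proof (rule eq_vecI)
    fix k assume "k < dim_vec (0\<^sub>v n :: 'a vec)"
    then have k: "k < n" by simp
    have "y $ k \<cdot>\<^sub>v w k = (E k * P) *\<^sub>v y" unfolding EP[of k, unfolded ltn[symmetric], OF k] PDy[OF y k] ..
    also have "\<dots> = E k *\<^sub>v (P *\<^sub>v y)" using E[of k] k P y by (simp add: ltn)
    also have "\<dots> = 0\<^sub>v n" unfolding Py using mvz E[of k] k by (simp add: ltn)
    finally have z: "y $ k \<cdot>\<^sub>v w k = 0\<^sub>v n" .
    obtain i where i: "i < n" "w k $ i \<noteq> 0" using wnz[of k] w[of k]
      by (metis carrier_vecD eq_vecI index_zero_vec(1,2))
    have "y $ k * w k $ i = 0" using arg_cong[OF z, of "\<lambda>x. x $ i"] i w[of k] by simp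
    then show "y $ k = 0\<^sub>v n $ k" using i k by simp
  qed (use y in auto)
  obtain Q where Q: "Q \<in> carrier_mat n n" "Q * P = 1\<^sub>m n" "P * Q = 1\<^sub>m n"
    using inverse_exists[OF P P_inj] by blast
  have EPDQ: "E k = P * D k * Q" if k: "k \<le> d" for k
  proof -
    have "E k = E k * (P * Q)" using E[OF k] Q by simp
    also have "\<dots> = (E k * P) * Q" using E[OF k] P Q by (simp add: MR.m_assoc)
    finally show ?thesis unfolding EP[OF k] .
  qed
  define N where "N = Q * Astar * P"
  have Nc: "N \<in> carrier_mat n n" unfolding N_def using Q Astar_c P by simp
  have mm_entry: "(X * Y) $$ (i,j) = (\<Sum>l<n. X $$ (i,l) * Y $$ (l,j))"
    if "X \<in> carrier_mat n n" "Y \<in> carrier_mat n n" "i < n" "j < n" for X Y :: "'a mat" and i j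
    using that by (auto simp: scalar_prod_def row_def col_def atLeast0LessThan intro!: sum.cong)
  have DX: "(D k * X) $$ (i,j) = (if i = k then X $$ (k,j) else 0)"
    if "X \<in> carrier_mat n n" "i < n" "j < n" for X k i j
  proof -
    have "(D k * X) $$ (i,j) = (\<Sum>l<n. D k $$ (i,l) * X $$ (l,j))" by (rule mm_entry) (use that D in auto)
    also have "\<dots> = (\<Sum>l<n. (if l = i then (if i = k then X $$ (l,j) else 0) else 0))"
      by (rule sum.cong) (use that in \<open>auto simp: D_def Dg_def\<close>)
    finally have "(D k * X) $$ (i,j) = (\<Sum>l<n. (if l = i then (if i = k then X $$ (l,j) else 0) else 0))" .
    then show ?thesis using that by simp
  qed
  have XD: "(X * D k) $$ (i,j) = (if j = k then X $$ (i,k) else 0)"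
    if "X \<in> carrier_mat n n" "i < n" "j < n" for X k i j
  proof -
    have "(X * D k) $$ (i,j) = (\<Sum>l<n. X $$ (i,l) * D k $$ (l,j))" by (rule mm_entry) (use that D in auto)
    also have "\<dots> = (\<Sum>l<n. (if l = j then (if j = k then X $$ (i,l) else 0) else 0))"
      by (rule sum.cong) (use that in \<open>auto simp: D_def Dg_def\<close>)
    finally have "(X * D k) $$ (i,j) = (\<Sum>l<n. (if l = j then (if j = k then X $$ (i,l) else 0) else 0))" .
    then show ?thesis using that by simp
  qed
  have QPX: "Q * (P * X) = X" if "X \<in> carrier_mat n n" for X
    using that Q P by (simp add: MR.m_assoc[symmetric])
  have PQX: "P * (Q * X) = X" if "X \<in> carrier_mat n n" for X
    using that Q P by (simp add: MR.m_assoc[symmetric])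
  have adj_iff: "adj r j \<longleftrightarrow> r \<noteq> j \<and> N $$ (r,j) \<noteq> 0" if j: "j \<le> d" for j
  proof -
    define S where "S = D r * N * D j"
    have S: "S \<in> carrier_mat n n" unfolding S_def using D Nc by auto
    have Se: "S $$ (p,q) = (if p = r \<and> q = j then N $$ (r,j) else 0)" if "p < n" "q < n" for p q
      unfolding S_def using that XD[of "D r * N" p q j] DX[OF Nc] D Nc rs j by (auto simp: ltn)
    have prd: "E r * Astar * E j = P * (S * Q)"
      unfolding EPDQ[OF rs(1)] EPDQ[OF j] S_def N_def
      using P Q D Astar_c by (simp add: MR.m_assoc)
    have bk: "Q * (E r * Astar * E j) * P = S"
      unfolding prd using S P Q by (simp add: MR.m_assoc QPX)
    show ?thesis
    proof (cases "N $$ (r,j) = 0")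
      case True
      then have "S = 0\<^sub>m n n" using Se S by (intro eq_matI) auto
      then show ?thesis unfolding adj_def prd using True P Q by simp
    next
      case False
      have "E r * Astar * E j \<noteq> 0\<^sub>m n n"
      proof
        assume "E r * Astar * E j = 0\<^sub>m n n"
        then have "S = 0\<^sub>m n n" using bk Q P by simp
        then have "S $$ (r,j) = 0" using rs j by (simp add: ltn)
        then show False using Se[of r j] rs j False by (simp add: ltn)
      qed
      then show ?thesis unfolding adj_def using False by simp
    qed
  qed
  have astar_N: "astar r = N $$ (r,r)"
  proof -
    have "astar r = mtrace (P * (D r * Q * Astar))"
      unfolding astar_def EPDQ[OF rs(1)] using P Q D Astar_c by (simp add: MR.m_assoc)
    also have "\<dots> = mtrace ((D r * Q * Astar) * P)"
      by (rule mtrace_comm) (use P Q D Astar_c in auto)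
    also have "(D r * Q * Astar) * P = D r * N"
      unfolding N_def using P Q D Astar_c by (simp add: MR.m_assoc)
    also have "mtrace (D r * N) = (\<Sum>i<n. if i = r then N $$ (r,r) else 0)"
    proof -
      have "dim_row (D r * N) = n" using D[of r] by simp
      then show ?thesis unfolding mtrace_def using DX[OF Nc] by (auto intro!: sum.cong)
    qed
    also have "\<dots> = N $$ (r,r)" using rs by (simp add: ltn)
    finally show ?thesis .
  qed
  have DgX: "(Dg f * X) $$ (i,j) = f i * X $$ (i,j)"
    if "X \<in> carrier_mat n n" "i < n" "j < n" for X f i j
  proof -
    have "(Dg f * X) $$ (i,j) = (\<Sum>l<n. Dg f $$ (i,l) * X $$ (l,j))" by (rule mm_entry) (use that Dg in auto)
    also have "\<dots> = (\<Sum>l<n. (if l = i then f i * X $$ (l,j) else 0))"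
      by (rule sum.cong) (use that in \<open>auto simp: Dg_def\<close>)
    finally show ?thesis using that by simp
  qed
  have XDg: "(X * Dg f) $$ (i,j) = X $$ (i,j) * f j"
    if "X \<in> carrier_mat n n" "i < n" "j < n" for X f i j
  proof -
    have "(X * Dg f) $$ (i,j) = (\<Sum>l<n. X $$ (i,l) * Dg f $$ (l,j))" by (rule mm_entry) (use that Dg in auto)
    also have "\<dots> = (\<Sum>l<n. (if l = j then X $$ (i,l) * f j else 0))"
      by (rule sum.cong) (use that in \<open>auto simp: Dg_def\<close>)
    finally show ?thesis using that by simp
  qed
  define Lam where "Lam = Dg th"
  have Lam: "Lam \<in> carrier_mat n n" unfolding Lam_def using Dg by simp
  have TU: "T * U = U * Lam"
  proof (rule eq_matI)
    fix i j assume "i < dim_row (U * Lam)" "j < dim_col (U * Lam)"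
    then have i: "i < n" and j: "j < n" using U Lam by auto
    have "(T * U) $$ (i,j) = (T *\<^sub>v uvec j) $ i" using XYcol[OF T U i j] colU[OF j] by simp
    also have "\<dots> = th j * U $$ (i,j)" using Tu[of j] i j uvec[of j] unfolding U_def by (simp add: ltn)
    also have "\<dots> = (U * Lam) $$ (i,j)" unfolding Lam_def using XDg[OF U i j] by simp
    finally show "(T * U) $$ (i,j) = (U * Lam) $$ (i,j)" .
  qed (use T U Lam in auto)
  define Z where "Z = Q * V"
  have Z: "Z \<in> carrier_mat n n" unfolding Z_def using Q V by simp
  have ZU: "Z * U = 1\<^sub>m n" unfolding Z_def using Q V U P_def by (simp add: MR.m_assoc)
  have UZ: "U * Z = 1\<^sub>m n" by (rule mat_mult_left_right_inverse[OF Z U ZU])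
  have ZT: "Z * T = Lam * Z"
  proof -
    have "Z * T = Z * (T * (U * Z))" using UZ T by simp
    also have "\<dots> = Z * ((T * U) * Z)" using Z T U by (simp add: MR.m_assoc)
    also have "\<dots> = (Z * U) * (Lam * Z)" unfolding TU using Z U Lam by (simp add: MR.m_assoc)
    finally show ?thesis using ZU Lam Z by simp
  qed
  have AstarVX: "Astar * (V * X) = V * (Dg ths * X)" if "X \<in> carrier_mat n n" for X
  proof -
    have "Astar * (V * X) = (Astar * V) * X" using that Astar_c V by (simp add: MR.m_assoc)
    also have "\<dots> = V * (Dg ths * X)" unfolding AstarV using that V Dg by (simp add: MR.m_assoc)
    finally show ?thesis .
  qed
  have N_ZU: "N = Z * Dg ths * U"
    unfolding N_def P_def Z_def using Q V U Astar_c Dg by (simp add: MR.m_assoc AstarVX)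
  have reassoc: "X * (Y * M) = Y' * (Z' * M)" if "X * Y = Y' * Z'" "X \<in> carrier_mat n n" "Y \<in> carrier_mat n n"
     "Y' \<in> carrier_mat n n" "Z' \<in> carrier_mat n n" "M \<in> carrier_mat n n" for X Y Y' Z' M :: "'a mat"
    using that assoc_mult_mat[OF that(2,3,6)] assoc_mult_mat[OF that(4,5,6)] by simp
  define kk where "kk = rec_nat (1::'a) (\<lambda>i x. x * b i / c (Suc i))"
  have kk0: "kk 0 = 1" and kkS: "kk (Suc i) = kk i * b i / c (Suc i)" for i by (simp_all add: kk_def)
  have kknz: "kk i \<noteq> 0" if "i \<le> d" for i
    using that
  proof (induction i)
    case 0 then show ?case by (simp add: kk0)
  next
    case (Suc i)
    then show ?case using bnz[of i] cnz[of i] by (simp add: kkS)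
  qed
  define K where "K = Dg kk"
  have K: "K \<in> carrier_mat n n" unfolding K_def using Dg by simp
  have TT: "transpose_mat T \<in> carrier_mat n n" using T by simp
  have UT: "transpose_mat U \<in> carrier_mat n n" using U by simp
  have DgT: "transpose_mat (Dg f) = Dg f" for f by (rule eq_matI) (auto simp: Dg_def)
  have Tsym: "T $$ (j,i) * kk j = kk i * T $$ (i,j)" if "i < n" "j < n" for i j
  proof -
    consider "i = j" | "j = i + 1" | "i = j + 1" | "i \<noteq> j \<and> j \<noteq> i + 1 \<and> i \<noteq> j + 1" by blast
    then show ?thesis
    proof cases
      case 1 then show ?thesis by simp
    next
      case 2
      then have "i < d" using that by (simp add: ltn)
      then show ?thesis using 2 that cnz[of i] unfolding T_def by (simp add: kkS)
    next
      case 3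
      then have "j < d" using that by (simp add: ltn)
      then show ?thesis using 3 that cnz[of j] unfolding T_def by (simp add: kkS)
    next
      case 4 then show ?thesis using that unfolding T_def by auto
    qed
  qed
  have TK: "transpose_mat T * K = K * T"
  proof (rule eq_matI)
    fix i j assume "i < dim_row (K * T)" "j < dim_col (K * T)"
    then have i: "i < n" and j: "j < n" using K T by auto
    show "(transpose_mat T * K) $$ (i,j) = (K * T) $$ (i,j)"
      unfolding K_def using XDg[OF TT i j] DgX[OF T i j] Tsym[OF i j] i j T by simp
  qed (use K T in auto)
  define G where "G = transpose_mat U * K * U"
  have G: "G \<in> carrier_mat n n" unfolding G_def using U K by simp
  have LUT: "Lam * transpose_mat U = transpose_mat U * transpose_mat T"
  proof -
    have "Lam * transpose_mat U = transpose_mat (U * Lam)"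
      using transpose_mult[OF U Lam] DgT unfolding Lam_def by simp
    also have "\<dots> = transpose_mat U * transpose_mat T" unfolding TU[symmetric] by (rule transpose_mult[OF T U])
    finally show ?thesis .
  qed
  have LUT': "Lam * (transpose_mat U * X) = transpose_mat U * (transpose_mat T * X)" if "X \<in> carrier_mat n n" for X
    by (rule reassoc[OF LUT Lam UT UT TT that])
  have TK': "transpose_mat T * (K * X) = K * (T * X)" if "X \<in> carrier_mat n n" for X
    by (rule reassoc[OF TK TT K K T that])
  have TU': "T * (U * X) = U * (Lam * X)" if "X \<in> carrier_mat n n" for X
    by (rule reassoc[OF TU T U U Lam that])
  have LG: "Lam * G = G * Lam"
    unfolding G_def using Lam UT TT K U T by (simp add: MR.m_assoc LUT' TK' TU' TU)
  have Gdiag: "G $$ (i,j) = 0" if "i < n" "j < n" "i \<noteq> j" for i j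
  proof -
    have "th i * G $$ (i,j) = G $$ (i,j) * th j"
      using arg_cong[OF LG, of "\<lambda>M. M $$ (i,j)"] DgX[OF G that(1,2)] XDg[OF G that(1,2)]
      unfolding Lam_def by simp
    moreover have "th i \<noteq> th j" using th_distinct that by (auto simp: ltn dest: inj_onD)
    ultimately show ?thesis by (metis mult.commute mult_right_cancel)
  qed
  have Dgv: "(Dg f *\<^sub>v x) $ l = f l * x $ l" if "x \<in> carrier_vec n" "l < n" for f x l
  proof -
    have "(Dg f *\<^sub>v x) $ l = (\<Sum>j<n. Dg f $$ (l,j) * x $ j)" by (rule mv_entry) (use that Dg in auto)
    also have "\<dots> = (\<Sum>j<n. if j = l then f l * x $ j else 0)"
      by (rule sum.cong) (use that in \<open>auto simp: Dg_def\<close>)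
    finally show ?thesis using that by simp
  qed
  have ZTUT: "transpose_mat Z * transpose_mat U = 1\<^sub>m n"
    using transpose_mult[OF U Z] UZ by simp
  have ZTc: "transpose_mat Z \<in> carrier_mat n n" using Z by simp
  have Gnz: "G $$ (i,i) \<noteq> 0" if i: "i < n" for i
  proof
    assume G0: "G $$ (i,i) = 0"
    define e :: "'a vec" where "e = unit_vec n i"
    have e: "e \<in> carrier_vec n" unfolding e_def by simp
    have Ge: "G *\<^sub>v e = 0\<^sub>v n"
    proof (rule eq_vecI)
      fix l assume "l < dim_vec (0\<^sub>v n :: 'a vec)"
      then have l: "l < n" by simp
      have "(G *\<^sub>v e) $ l = (\<Sum>j<n. G $$ (l,j) * e $ j)" by (rule mv_entry[OF G e l])
      also have "\<dots> = (\<Sum>j<n. if j = i then G $$ (l,i) else 0)"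
        by (rule sum.cong) (use i in \<open>auto simp: e_def\<close>)
      also have "\<dots> = G $$ (l,i)" using i by simp
      also have "\<dots> = 0" using G0 Gdiag[OF l i] by (cases "l = i") auto
      finally show "(G *\<^sub>v e) $ l = 0\<^sub>v n $ l" using l by simp
    qed (use G in auto)
    have "transpose_mat Z * G = K * U"
    proof -
      have "transpose_mat Z * G = transpose_mat Z * (transpose_mat U * (K * U))"
        unfolding G_def using UT K U by (simp add: MR.m_assoc)
      also have "\<dots> = (transpose_mat Z * transpose_mat U) * (K * U)"
        using ZTc UT K U by (simp add: MR.m_assoc)
      finally show ?thesis using ZTUT K U by simp
    qed
    then have "K *\<^sub>v (U *\<^sub>v e) = transpose_mat Z *\<^sub>v (G *\<^sub>v e)"
      using K U e ZTc G by (metis assoc_mult_mat_vec)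
    then have KUe: "K *\<^sub>v (U *\<^sub>v e) = 0\<^sub>v n" unfolding Ge using mvz[OF ZTc] by simp
    have Ue: "U *\<^sub>v e = 0\<^sub>v n"
    proof (rule eq_vecI)
      fix l assume "l < dim_vec (0\<^sub>v n :: 'a vec)"
      then have l: "l < n" by simp
      have "kk l * (U *\<^sub>v e) $ l = 0"
        using Dgv[of "U *\<^sub>v e" l kk] arg_cong[OF KUe, of "\<lambda>x. x $ l"] U e l unfolding K_def by simp
      then show "(U *\<^sub>v e) $ l = 0\<^sub>v n $ l" using kknz[of l] l by (simp add: ltn)
    qed (use U in auto)
    have "e = (Z * U) *\<^sub>v e" using ZU e by simp
    also have "\<dots> = Z *\<^sub>v (U *\<^sub>v e)" using Z U e by simp
    also have "\<dots> = 0\<^sub>v n" unfolding Ue using mvz[OF Z] .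
    finally have "e $ i = 0" using i by simp
    then show False unfolding e_def using i by simp
  qed
  define H where "H = transpose_mat U * Dg (\<lambda>i. kk i * ths i) * U"
  have KDg: "K * Dg ths = Dg (\<lambda>i. kk i * ths i)"
    by (rule eq_matI) (use K Dg DgX[OF Dg] in \<open>auto simp: K_def Dg_def\<close>)
  have KDg': "K * (Dg ths * X) = Dg (\<lambda>i. kk i * ths i) * X" if "X \<in> carrier_mat n n" for X
    using KDg assoc_mult_mat[OF K Dg[of ths] that] by simp
  have UZX: "U * (Z * X) = X" if "X \<in> carrier_mat n n" for X
    using assoc_mult_mat[OF U Z that] UZ that by simp
  have GN: "G * N = H"
    unfolding G_def H_def N_ZU using UT K U Z Dg by (simp add: MR.m_assoc UZX KDg')
  have Hentry: "H $$ (k,l) = (\<Sum>m<n. U $$ (m,k) * (kk m * ths m) * U $$ (m,l))" if "k < n" "l < n" for k l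
  proof -
    have "H $$ (k,l) = (\<Sum>m<n. (transpose_mat U * Dg (\<lambda>i. kk i * ths i)) $$ (k,m) * U $$ (m,l))"
      unfolding H_def by (rule mm_entry) (use UT Dg U that in auto)
    also have "\<dots> = (\<Sum>m<n. U $$ (m,k) * (kk m * ths m) * U $$ (m,l))"
      by (rule sum.cong) (use XDg[OF UT] U that in auto)
    finally show ?thesis .
  qed
  have Hsym: "H $$ (k,l) = H $$ (l,k)" if "k < n" "l < n" for k l
    unfolding Hentry[OF that] Hentry[OF that(2,1)] by (rule sum.cong) (auto simp: ac_simps)
  have GNe: "(G * N) $$ (k,l) = G $$ (k,k) * N $$ (k,l)" if "k < n" "l < n" for k l
  proof -
    have "(G * N) $$ (k,l) = (\<Sum>m<n. G $$ (k,m) * N $$ (m,l))" by (rule mm_entry) (use G Nc that in auto)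
    also have "\<dots> = (\<Sum>m<n. if m = k then G $$ (k,k) * N $$ (k,l) else 0)"
      by (rule sum.cong) (use Gdiag that in auto)
    finally show ?thesis using that by simp
  qed
  have Nsym: "N $$ (k,l) = 0 \<longleftrightarrow> N $$ (l,k) = 0" if "k < n" "l < n" for k l
  proof -
    have "G $$ (k,k) * N $$ (k,l) = G $$ (l,l) * N $$ (l,k)"
      using GNe[OF that] GNe[OF that(2,1)] Hsym[OF that] GN by simp
    then show ?thesis using Gnz[OF that(1)] Gnz[OF that(2)] by auto
  qed
  have rn: "r < n" "s < n" using rs by (auto simp: ltn)
  define avec where "avec = uvec r"
  have av: "avec \<in> carrier_vec n" unfolding avec_def using uvec .
  have av_e: "avec $ i = \<alpha> i" if "i < n" for i unfolding avec_def uvec_def \<alpha>_def using that by simp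
  define y where "y = Dg ths *\<^sub>v avec"
  have y: "y \<in> carrier_vec n" unfolding y_def using Dg[of ths] av by simp
  have y_e: "y $ i = ths i * \<alpha> i" if "i < n" for i unfolding y_def using Dgv[OF av that] av_e[OF that] by simp
  define L where "L = T *\<^sub>v y - th r \<cdot>\<^sub>v y"
  define R where "R = (th s - th r) \<cdot>\<^sub>v (y - astar r \<cdot>\<^sub>v avec)"
  have L: "L \<in> carrier_vec n" unfolding L_def using T y by simp
  have R: "R \<in> carrier_vec n" unfolding R_def using y av by simp
  have L_e: "L $ i = c i * ths (i - 1) * \<alpha> (i - 1) + a i * ths i * \<alpha> i
                    + b i * ths (i + 1) * \<alpha> (i + 1) - th r * ths i * \<alpha> i" if i: "i \<le> d" for i
  proof -
    have "L $ i = (T *\<^sub>v y) $ i - th r * y $ i" unfolding L_def using T y i by (simp add: ltn)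
    also have "(T *\<^sub>v y) $ i = (if 0 < i then c i * y $ (i-1) else 0) + a i * y $ i + (if i < d then b i * y $ (i+1) else 0)"
      by (rule Tentry[OF y i])
    finally show ?thesis using i y_e[of i] y_e[of "i-1"] y_e[of "i+1"] c_0 b_d
      by (cases "i = 0"; cases "i = d") (auto simp: ltn)
  qed
  have R_e: "R $ i = (th s - th r) * (ths i - astar r) * \<alpha> i" if i: "i \<le> d" for i
    unfolding R_def using y av i y_e[of i] av_e[of i] by (simp add: ltn algebra_simps)
  have Zav: "Z *\<^sub>v avec = unit_vec n r"
  proof -
    have "Z *\<^sub>v avec = col (Z * U) r" by (subst col_mult2[OF Z U rn(1)]) (simp add: avec_def colU[OF rn(1)])
    then show ?thesis using ZU rn by simp
  qed
  have Zy: "Z *\<^sub>v y = col N r"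
  proof -
    have "col N r = (Z * Dg ths) *\<^sub>v col U r" unfolding N_ZU by (rule col_mult2) (use Z Dg[of ths] U rn in auto)
    then show ?thesis unfolding y_def avec_def colU[OF rn(1)] using assoc_mult_mat_vec[OF Z Dg[of ths] uvec] by simp
  qed
  have cN: "col N r \<in> carrier_vec n" using col_dim[of N r] carrier_matD(1)[OF Nc] by simp
  have ZL: "(Z *\<^sub>v L) $ k = (th k - th r) * N $$ (k,r)" if k: "k < n" for k
  proof -
    have "Z *\<^sub>v L = Z *\<^sub>v (T *\<^sub>v y) - Z *\<^sub>v (th r \<cdot>\<^sub>v y)"
      unfolding L_def by (rule mult_minus_distrib_mat_vec[OF Z]) (use T y in auto)
    also have "Z *\<^sub>v (T *\<^sub>v y) = Lam *\<^sub>v (Z *\<^sub>v y)"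
      using assoc_mult_mat_vec[OF Z T y] assoc_mult_mat_vec[OF Lam Z y] ZT by simp
    also have "Z *\<^sub>v (th r \<cdot>\<^sub>v y) = th r \<cdot>\<^sub>v (Z *\<^sub>v y)" by (rule mult_mat_vec[OF Z y])
    finally have "Z *\<^sub>v L = Lam *\<^sub>v col N r - th r \<cdot>\<^sub>v col N r" unfolding Zy .
    moreover note cN
    moreover have "col N r $ k = N $$ (k,r)" using Nc k rn by simp
    ultimately show ?thesis unfolding Lam_def using Dgv[of "col N r" k th] k Nc Dg[of th] by (simp add: algebra_simps)
  qed
  have ZR: "(Z *\<^sub>v R) $ k = (th s - th r) * (N $$ (k,r) - (if k = r then N $$ (r,r) else 0))" if k: "k < n" for k
  proof -
    have "Z *\<^sub>v R = (th s - th r) \<cdot>\<^sub>v (Z *\<^sub>v (y - astar r \<cdot>\<^sub>v avec))"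
      unfolding R_def by (rule mult_mat_vec[OF Z]) (use y av in auto)
    also have "Z *\<^sub>v (y - astar r \<cdot>\<^sub>v avec) = Z *\<^sub>v y - Z *\<^sub>v (astar r \<cdot>\<^sub>v avec)"
      by (rule mult_minus_distrib_mat_vec[OF Z]) (use y av in auto)
    also have "Z *\<^sub>v (astar r \<cdot>\<^sub>v avec) = astar r \<cdot>\<^sub>v unit_vec n r"
      using mult_mat_vec[OF Z av] Zav by simp
    finally have "Z *\<^sub>v R = (th s - th r) \<cdot>\<^sub>v (col N r - astar r \<cdot>\<^sub>v unit_vec n r)" unfolding Zy .
    then show ?thesis using k Nc astar_N rn by (simp add: cN)
  qed
  have Zinj: "x = x'" if "x \<in> carrier_vec n" "x' \<in> carrier_vec n" "Z *\<^sub>v x = Z *\<^sub>v x'" for x x'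
  proof -
    have "x = (U * Z) *\<^sub>v x" using UZ that by simp
    also have "\<dots> = U *\<^sub>v (Z *\<^sub>v x')" using U Z that by simp
    also have "\<dots> = (U * Z) *\<^sub>v x'" using U Z that by simp
    finally show ?thesis using UZ that by simp
  qed
  define M where "M k = N $$ (k,r)" for k
  have eq_iff: "(\<forall>i\<le>d. c i * ths (i - 1) * \<alpha> (i - 1) + a i * ths i * \<alpha> i
                    + b i * ths (i + 1) * \<alpha> (i + 1) - th r * ths i * \<alpha> i
                  = (th s - th r) * (ths i - astar r) * \<alpha> i) \<longleftrightarrow> L = R"
  proof
    assume H: "\<forall>i\<le>d. c i * ths (i - 1) * \<alpha> (i - 1) + a i * ths i * \<alpha> i
                    + b i * ths (i + 1) * \<alpha> (i + 1) - th r * ths i * \<alpha> i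
                  = (th s - th r) * (ths i - astar r) * \<alpha> i"
    show "L = R"
    proof (rule eq_vecI)
      fix i assume "i < dim_vec R" then have i: "i \<le> d" using R by (simp add: ltn)
      show "L $ i = R $ i" using L_e[OF i] R_e[OF i] H i by simp
    qed (use L R in simp)
  next
    assume "L = R"
    then show "\<forall>i\<le>d. c i * ths (i - 1) * \<alpha> (i - 1) + a i * ths i * \<alpha> i
                    + b i * ths (i + 1) * \<alpha> (i + 1) - th r * ths i * \<alpha> i
                  = (th s - th r) * (ths i - astar r) * \<alpha> i"
      using L_e R_e by metis
  qed
  have nz_iff: "(\<exists>i\<le>d. (th s - th r) * (ths i - astar r) * \<alpha> i \<noteq> 0) \<longleftrightarrow> R \<noteq> 0\<^sub>v n"
  proof
    assume "\<exists>i\<le>d. (th s - th r) * (ths i - astar r) * \<alpha> i \<noteq> 0"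
    then obtain i where "i \<le> d" "R $ i \<noteq> 0" using R_e by metis
    then show "R \<noteq> 0\<^sub>v n" by (auto simp: ltn)
  next
    assume "R \<noteq> 0\<^sub>v n"
    then obtain i where "i < n" "R $ i \<noteq> 0" using R by (metis carrier_vecD eq_vecI index_zero_vec(1,2))
    then show "\<exists>i\<le>d. (th s - th r) * (ths i - astar r) * \<alpha> i \<noteq> 0" using R_e by (auto simp: ltn)
  qed
  have LR_iff: "L = R \<longleftrightarrow> (\<forall>k<n. (th k - th r) * M k = (th s - th r) * (M k - (if k = r then M r else 0)))"
  proof
    assume "L = R"
    then show "\<forall>k<n. (th k - th r) * M k = (th s - th r) * (M k - (if k = r then M r else 0))"
      using ZL ZR unfolding M_def by metis
  next
    assume H: "\<forall>k<n. (th k - th r) * M k = (th s - th r) * (M k - (if k = r then M r else 0))"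
    have "Z *\<^sub>v L = Z *\<^sub>v R"
    proof (rule eq_vecI)
      fix k assume "k < dim_vec (Z *\<^sub>v R)" then have k: "k < n" using Z by simp
      show "(Z *\<^sub>v L) $ k = (Z *\<^sub>v R) $ k" using ZL[OF k] ZR[OF k] H k unfolding M_def by simp
    qed (use Z in simp)
    then show "L = R" using Zinj L R by blast
  qed
  have R0_iff: "R = 0\<^sub>v n \<longleftrightarrow> (\<forall>k<n. (th s - th r) * (M k - (if k = r then M r else 0)) = 0)"
  proof
    assume "R = 0\<^sub>v n"
    then have "Z *\<^sub>v R = 0\<^sub>v n" using mvz[OF Z] by simp
    then show "\<forall>k<n. (th s - th r) * (M k - (if k = r then M r else 0)) = 0"
      using ZR unfolding M_def by (metis index_zero_vec(1))
  next
    assume H: "\<forall>k<n. (th s - th r) * (M k - (if k = r then M r else 0)) = 0"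
    have "Z *\<^sub>v R = Z *\<^sub>v 0\<^sub>v n"
    proof (rule eq_vecI)
      fix k assume "k < dim_vec (Z *\<^sub>v 0\<^sub>v n)" then have k: "k < n" using Z by simp
      show "(Z *\<^sub>v R) $ k = (Z *\<^sub>v 0\<^sub>v n) $ k" using ZR[OF k] H k mvz[OF Z] unfolding M_def by simp
    qed (use Z in simp)
    then show "R = 0\<^sub>v n" using Zinj R by simp
  qed
  have thsr: "th s \<noteq> th r" using th_distinct rs by (auto dest: inj_onD)
  have eqk: "((th k - th r) * M k = (th s - th r) * (M k - (if k = r then M r else 0))) \<longleftrightarrow> (k = r \<or> k = s \<or> M k = 0)"
    if k: "k < n" for k
  proof (cases "k = r")
    case True then show ?thesis by simp
  next
    case False
    have "((th k - th r) * M k = (th s - th r) * M k) \<longleftrightarrow> (th k - th s) * M k = 0"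
      by (auto simp: algebra_simps)
    moreover have "th k = th s \<longleftrightarrow> k = s" using th_distinct k rn by (auto simp: ltn dest: inj_onD)
    ultimately show ?thesis using False by auto
  qed
  have nzk: "((th s - th r) * (M k - (if k = r then M r else 0)) = 0) \<longleftrightarrow> (k = r \<or> M k = 0)" for k
    using thsr by auto
  have A1: "L = R \<longleftrightarrow> (\<forall>k<n. k = r \<or> k = s \<or> M k = 0)"
    unfolding LR_iff using eqk by simp
  have A2: "R = 0\<^sub>v n \<longleftrightarrow> (\<forall>k<n. k = r \<or> M k = 0)"
    unfolding R0_iff using nzk by simp
  have RHS: "(L = R \<and> R \<noteq> 0\<^sub>v n) \<longleftrightarrow> (M s \<noteq> 0 \<and> (\<forall>k<n. k \<noteq> r \<longrightarrow> k \<noteq> s \<longrightarrow> M k = 0))"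
  proof
    assume H: "L = R \<and> R \<noteq> 0\<^sub>v n"
    then have H1: "\<forall>k<n. k = r \<or> k = s \<or> M k = 0" using A1 by simp
    from H obtain k where k: "k < n" "k \<noteq> r" "M k \<noteq> 0" using A2 by auto
    then have "k = s" using H1 by auto
    then show "M s \<noteq> 0 \<and> (\<forall>k<n. k \<noteq> r \<longrightarrow> k \<noteq> s \<longrightarrow> M k = 0)" using k H1 by auto
  next
    assume H: "M s \<noteq> 0 \<and> (\<forall>k<n. k \<noteq> r \<longrightarrow> k \<noteq> s \<longrightarrow> M k = 0)"
    then have "L = R" using A1 by auto
    moreover have "R \<noteq> 0\<^sub>v n" using A2 H rn rs(3) by auto
    ultimately show "L = R \<and> R \<noteq> 0\<^sub>v n" by simp
  qed
  have adjM: "adj r j \<longleftrightarrow> r \<noteq> j \<and> M j \<noteq> 0" if "j < n" for j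
  proof -
    have "N $$ (r,j) = 0 \<longleftrightarrow> M j = 0" using Nsym[OF rn(1) that] unfolding M_def .
    then show ?thesis using adj_iff[of j] that by (simp add: ltn)
  qed
  have LHS: "(adj r s \<and> (\<forall>j\<le>d. adj r j \<longrightarrow> j = s)) \<longleftrightarrow> (M s \<noteq> 0 \<and> (\<forall>k<n. k \<noteq> r \<longrightarrow> k \<noteq> s \<longrightarrow> M k = 0))"
  proof
    assume H: "adj r s \<and> (\<forall>j\<le>d. adj r j \<longrightarrow> j = s)"
    have "M s \<noteq> 0" using H adjM[OF rn(2)] by simp
    moreover have "M k = 0" if "k < n" "k \<noteq> r" "k \<noteq> s" for k
      using H adjM[OF that(1)] that by (auto simp: ltn)
    ultimately show "M s \<noteq> 0 \<and> (\<forall>k<n. k \<noteq> r \<longrightarrow> k \<noteq> s \<longrightarrow> M k = 0)" by blast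
  next
    assume H: "M s \<noteq> 0 \<and> (\<forall>k<n. k \<noteq> r \<longrightarrow> k \<noteq> s \<longrightarrow> M k = 0)"
    have "adj r s" using H adjM[OF rn(2)] rs(3) by simp
    moreover have "j = s" if "j \<le> d" "adj r j" for j
      using H adjM[of j] that by (auto simp: ltn)
    ultimately show "adj r s \<and> (\<forall>j\<le>d. adj r j \<longrightarrow> j = s)" by blast
  qed
  show ?thesis unfolding eq_iff nz_iff RHS LHS ..
qed


end
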